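(* Let $n$ be a positive even integer and let $(a_{i,j})_{1\le i\ne j\le n}$ be a family of real numbers. Choose uniformly at random a subset of exactly $n/2$ indices of $\{1,\dots,n\}$ (sampling without replacement), and set $\varepsilon_i=1$ if $i$ is picked and $\varepsilon_i=-1$ otherwise. Let $$Z=\sum_{i\neq j}\varepsilon_i\varepsilon_j a_{i,j}.$$ Then there exist positive absolute constants $c$ and $C$ (not depending on $n$, on the $a_{i,j}$, or on $x$) such that for all $x>0$, $$\mathbb{P}\Big(Z\ge c\, n\max_{i\ne j}|a_{i,j}|\,(x+\log n)\Big)\le C e^{-x}.$$
   Context: The sum defining $Z$ runs over all ordered pairs $(i,j)$ with $1\le i,j\le n$ and $i\ne j$. The only randomness is the uniform choice of the subset of size $n/2$. *)

theory Defs
  imports "HOL-Probability.Probability"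
begin

definition half_subsets :: "nat \<Rightarrow> nat set set" where
  "half_subsets n = {S. S \<subseteq> {1..n} \<and> card S = n div 2}"

definition eps :: "nat set \<Rightarrow> nat \<Rightarrow> real" where
  "eps S i = (if i \<in> S then 1 else -1)"

definition Zsum :: "nat \<Rightarrow> (nat \<Rightarrow> nat \<Rightarrow> real) \<Rightarrow> nat set \<Rightarrow> real" where
  "Zsum n a S = (\<Sum>i\<in>{1..n}. \<Sum>j\<in>{1..n} - {i}. eps S i * eps S j * a i j)"

definition maxabs :: "nat \<Rightarrow> (nat \<Rightarrow> nat \<Rightarrow> real) \<Rightarrow> real" where
  "maxabs n a = Max {\<bar>a i j\<bar> | i j. i \<in> {1..n} \<and> j \<in> {1..n} \<and> i \<noteq> j}"

end

theory Submission
  imports Defs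
begin

lemma cosh_le_aux:
  fixes l :: real assumes "l > 0"
  shows "(exp l + exp (-l)) / 2 \<le> exp (l^2 / 2)"
proof -
  interpret interval_bounded_random_variable "measure_pmf (pmf_of_set {-1, 1::real})" "\<lambda>x. x" "-1" 1
    by unfold_locales (auto simp: AE_measure_pmf_iff)
  have E0: "measure_pmf.expectation (pmf_of_set {-1, 1::real}) (\<lambda>x. x) = 0"
    by (subst integral_pmf_of_set) auto
  have "nn_integral (measure_pmf (pmf_of_set {-1, 1::real})) (\<lambda>x. exp (l * x)) \<le> ennreal (exp (l\<^sup>2 * (1 - (-1))\<^sup>2 / 8))"
    by (rule Hoeffdings_lemma_nn_integral_0[OF assms E0])
  also have "nn_integral (measure_pmf (pmf_of_set {-1, 1::real})) (\<lambda>x. exp (l * x)) = (ennreal (exp (-l)) + ennreal (exp l)) / 2"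
    by (subst nn_integral_pmf_of_set) auto
  also have "\<dots> = ennreal ((exp l + exp (-l)) / 2)"
    by (simp del: ennreal_plus add: ennreal_plus[symmetric] ennreal_divide_numeral add.commute)
  finally show ?thesis by (simp add: power2_eq_square)
qed

lemma cosh_le: "exp x + exp (-x) \<le> 2 * exp ((x::real)^2 / 2)"
proof -
  consider "x > 0" | "x = 0" | "-x > 0" by linarith
  then show ?thesis
  proof cases
    case 1 then show ?thesis using cosh_le_aux[of x] by simp
  next
    case 3 then show ?thesis using cosh_le_aux[of "-x"] by simp
  qed simp
qed

lemma G_eq:
  assumes "finite J"
  shows "(\<Sum>V\<in>Pow J. exp (\<Sum>j\<in>J. eps V j * c j)) = (\<Prod>j\<in>J. exp (c j) + exp (- c j))"
proof -
  have "(\<Prod>j\<in>J. exp (c j) + exp (- c j)) = (\<Sum>X\<in>Pow J. (\<Prod>x\<in>X. exp (c x)) * (\<Prod>x\<in>J-X. exp (- c x)))"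
    by (rule prod_add[OF assms])
  also have "\<dots> = (\<Sum>V\<in>Pow J. exp (\<Sum>j\<in>J. eps V j * c j))"
  proof (rule sum.cong[OF refl])
    fix V assume V: "V \<in> Pow J"
    have fV: "finite V" using V assms finite_subset by auto
    have "exp (\<Sum>j\<in>J. eps V j * c j) = (\<Prod>j\<in>J. exp (eps V j * c j))" by (simp add: exp_sum assms)
    also have "\<dots> = (\<Prod>j\<in>J - V. exp (eps V j * c j)) * (\<Prod>j\<in>V. exp (eps V j * c j))"
      using V assms by (intro prod.subset_diff) auto
    also have "\<dots> = (\<Prod>x\<in>V. exp (c x)) * (\<Prod>x\<in>J-V. exp (- c x))"
      by (simp add: eps_def)
    finally show "(\<Prod>x\<in>V. exp (c x)) * (\<Prod>x\<in>J-V. exp (- c x)) = exp (\<Sum>j\<in>J. eps V j * c j)" by simp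
  qed
  finally show ?thesis by simp
qed

lemma G:
  assumes "finite J"
  shows "(\<Sum>V\<in>Pow J. exp (\<Sum>j\<in>J. eps V j * c j)) \<le> 2 ^ card J * exp ((\<Sum>j\<in>J. (c j)^2) / 2)"
proof -
  have "(\<Sum>V\<in>Pow J. exp (\<Sum>j\<in>J. eps V j * c j)) = (\<Prod>j\<in>J. exp (c j) + exp (- c j))"
    by (rule G_eq[OF assms])
  also have "\<dots> \<le> (\<Prod>j\<in>J. 2 * exp ((c j)^2 / 2))"
    by (intro prod_mono) (auto simp: cosh_le add_nonneg_nonneg)
  also have "\<dots> = 2 ^ card J * exp ((\<Sum>j\<in>J. (c j)^2) / 2)"
    by (simp add: prod.distrib exp_sum assms sum_divide_distrib)
  finally show ?thesis .
qed

lemma tail_one: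
  assumes J: "finite J" and s: "s > 0" and sq: "(\<Sum>j\<in>J. (a j)^2) \<le> s^2" and k: "k \<ge> 0"
  shows "real (card {V\<in>Pow J. k * s \<le> (\<Sum>j\<in>J. eps V j * a j)}) \<le> 2 ^ card J * exp (- (k^2) / 2)"
proof -
  define A where "A = {V\<in>Pow J. k * s \<le> (\<Sum>j\<in>J. eps V j * a j)}"
  have fA: "finite A" using J by (simp add: A_def)
  have "real (card A) * exp (k^2) = (\<Sum>V\<in>A. exp (k^2))" by simp
  also have "\<dots> \<le> (\<Sum>V\<in>A. exp (\<Sum>j\<in>J. eps V j * (k / s * a j)))"
  proof (rule sum_mono)
    fix V assume "V \<in> A"
    then have "k * s \<le> (\<Sum>j\<in>J. eps V j * a j)" by (simp add: A_def)
    then have "k / s * (k * s) \<le> k / s * (\<Sum>j\<in>J. eps V j * a j)"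
      using k s by (intro mult_left_mono) auto
    moreover have "k / s * (k * s) = k^2" using s by (simp add: power2_eq_square)
    moreover have "k / s * (\<Sum>j\<in>J. eps V j * a j) = (\<Sum>j\<in>J. eps V j * (k / s * a j))"
      by (simp add: sum_distrib_left mult_ac)
    ultimately show "exp (k^2) \<le> exp (\<Sum>j\<in>J. eps V j * (k / s * a j))" by simp
  qed
  also have "\<dots> \<le> (\<Sum>V\<in>Pow J. exp (\<Sum>j\<in>J. eps V j * (k / s * a j)))"
    using J by (intro sum_mono2) (auto simp: A_def)
  also have "\<dots> \<le> 2 ^ card J * exp ((\<Sum>j\<in>J. (k / s * a j)^2) / 2)"
    by (rule G[OF J])
  also have "(\<Sum>j\<in>J. (k / s * a j)^2) = (k/s)^2 * (\<Sum>j\<in>J. (a j)^2)"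
    unfolding sum_distrib_left by (rule sum.cong) (simp_all add: power2_eq_square)
  also have "\<dots> \<le> (k/s)^2 * s^2" using sq by (intro mult_left_mono) auto
  also have "\<dots> = k^2" using s by (simp add: power_divide)
  finally have "real (card A) * exp (k^2) \<le> 2 ^ card J * exp (k^2 / 2)" by simp
  then have "real (card A) \<le> 2 ^ card J * exp (k^2 / 2) / exp (k^2)"
    by (simp add: field_simps)
  also have "2 ^ card J * exp (k^2 / 2) / exp (k^2) = 2 ^ card J * exp (- (k^2) / 2)"
  proof -
    have e1: "exp (k^2) = exp (k^2/2) * exp (k^2/2)" by (simp flip: exp_add)
    have e2: "exp (- (k^2) / 2) = inverse (exp (k^2/2))" by (simp add: exp_minus[symmetric])
    show ?thesis unfolding e1 e2 by (simp add: field_simps)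
  qed
  finally show ?thesis by (simp add: A_def)
qed

lemma tail_abs:
  assumes J: "finite J" and s: "s > 0" and sq: "(\<Sum>j\<in>J. (a j)^2) \<le> s^2" and k: "k \<ge> 0"
  shows "real (card {V\<in>Pow J. k * s \<le> \<bar>\<Sum>j\<in>J. eps V j * a j\<bar>}) \<le> 2 * 2 ^ card J * exp (- (k^2) / 2)"
proof -
  have sq': "(\<Sum>j\<in>J. (- a j)^2) \<le> s^2" using sq by simp
  have "{V\<in>Pow J. k * s \<le> \<bar>\<Sum>j\<in>J. eps V j * a j\<bar>} \<subseteq>
        {V\<in>Pow J. k * s \<le> (\<Sum>j\<in>J. eps V j * a j)} \<union> {V\<in>Pow J. k * s \<le> (\<Sum>j\<in>J. eps V j * (- a j))}"
  proof
    fix V assume "V \<in> {V\<in>Pow J. k * s \<le> \<bar>\<Sum>j\<in>J. eps V j * a j\<bar>}"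
    moreover have "(\<Sum>j\<in>J. eps V j * (- a j)) = - (\<Sum>j\<in>J. eps V j * a j)" by (simp add: sum_negf)
    ultimately show "V \<in> {V\<in>Pow J. k * s \<le> (\<Sum>j\<in>J. eps V j * a j)} \<union> {V\<in>Pow J. k * s \<le> (\<Sum>j\<in>J. eps V j * (- a j))}"
      by (cases "(\<Sum>j\<in>J. eps V j * a j) \<ge> 0") auto
  qed
  then have "card {V\<in>Pow J. k * s \<le> \<bar>\<Sum>j\<in>J. eps V j * a j\<bar>} \<le>
        card ({V\<in>Pow J. k * s \<le> (\<Sum>j\<in>J. eps V j * a j)} \<union> {V\<in>Pow J. k * s \<le> (\<Sum>j\<in>J. eps V j * (- a j))})"
    using J by (intro card_mono) auto
  also have "\<dots> \<le> card {V\<in>Pow J. k * s \<le> (\<Sum>j\<in>J. eps V j * a j)} + card {V\<in>Pow J. k * s \<le> (\<Sum>j\<in>J. eps V j * (- a j))}"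
    by (rule card_Un_le)
  finally have "real (card {V\<in>Pow J. k * s \<le> \<bar>\<Sum>j\<in>J. eps V j * a j\<bar>}) \<le>
     real (card {V\<in>Pow J. k * s \<le> (\<Sum>j\<in>J. eps V j * a j)}) + real (card {V\<in>Pow J. k * s \<le> (\<Sum>j\<in>J. eps V j * (- a j))})"
    by linarith
  also have "\<dots> \<le> 2 ^ card J * exp (- (k^2) / 2) + 2 ^ card J * exp (- (k^2) / 2)"
    by (intro add_mono tail_one[OF J s sq k] tail_one[OF J s sq' k])
  finally show ?thesis by simp
qed

lemma abs_eps_sum: "\<bar>\<Sum>j\<in>J. eps V j * a j\<bar> \<le> (\<Sum>j\<in>J. \<bar>a j\<bar>)"
proof -
  have "\<bar>\<Sum>j\<in>J. eps V j * a j\<bar> \<le> (\<Sum>j\<in>J. \<bar>eps V j * a j\<bar>)" by (rule sum_abs)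
  also have "\<dots> = (\<Sum>j\<in>J. \<bar>a j\<bar>)" by (rule sum.cong) (auto simp: eps_def abs_mult)
  finally show ?thesis .
qed

lemma layer_bound:
  fixes b s \<theta> :: real and m :: nat
  assumes s: "s > 0" and th: "\<theta> \<ge> 0" and bm: "\<bar>b\<bar> \<le> real m * s"
  shows "exp (\<theta> * b^2) \<le> (\<Sum>k\<le>m. if real k * s \<le> \<bar>b\<bar> then exp (\<theta> * ((real k + 1) * s)^2) else 0)"
proof -
  define k where "k = nat (floor (\<bar>b\<bar> / s))"
  have k1: "real k * s \<le> \<bar>b\<bar>"
  proof -
    have "real k = of_int (floor (\<bar>b\<bar> / s))" using s by (simp add: k_def)
    also have "\<dots> \<le> \<bar>b\<bar> / s" by (rule of_int_floor_le)
    finally show ?thesis using s by (simp add: field_simps)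
  qed
  have k2: "\<bar>b\<bar> < (real k + 1) * s"
  proof -
    have "\<bar>b\<bar> / s < of_int (floor (\<bar>b\<bar> / s)) + 1" by linarith
    also have "of_int (floor (\<bar>b\<bar> / s)) = real k" using s by (simp add: k_def)
    finally show ?thesis using s by (simp add: field_simps)
  qed
  have km: "k \<le> m"
  proof -
    have "real k * s \<le> real m * s" using k1 bm by linarith
    then show ?thesis using s by simp
  qed
  have "b^2 \<le> ((real k + 1) * s)^2"
  proof -
    have "\<bar>b\<bar>^2 \<le> ((real k + 1) * s)^2" using k2 by (intro power_mono) auto
    then show ?thesis by simp
  qed
  then have "exp (\<theta> * b^2) \<le> exp (\<theta> * ((real k + 1) * s)^2)"
    using th by (simp add: mult_left_mono)
  also have "\<dots> = (if real k * s \<le> \<bar>b\<bar> then exp (\<theta> * ((real k + 1) * s)^2) else 0)"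
    using k1 by simp
  also have "\<dots> \<le> (\<Sum>k\<le>m. if real k * s \<le> \<bar>b\<bar> then exp (\<theta> * ((real k + 1) * s)^2) else 0)"
    by (rule member_le_sum) (use km in auto)
  finally show ?thesis .
qed

lemma geom_bound: "(\<Sum>k\<le>m. (q::real)^k) \<le> 1 / (1 - q)" if "0 \<le> q" "q < 1"
proof -
  have "(1 - q) * (\<Sum>k\<le>m. q^k) = 1 - q^(Suc m)"
    using sum_gp_multiplied[of 0 m q] by (simp add: atMost_atLeast0)
  then have "(\<Sum>k\<le>m. q^k) = (1 - q^(Suc m)) / (1 - q)"
    using that by (simp add: field_simps)
  also have "\<dots> \<le> 1 / (1 - q)" using that by (intro divide_right_mono) auto
  finally show ?thesis .
qed

lemma sq_moment:
  assumes J: "finite J" and s: "s > 0" and sq: "(\<Sum>j\<in>J. (a j)^2) \<le> s^2"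
    and sa: "(\<Sum>j\<in>J. \<bar>a j\<bar>) \<le> real m * s" and th: "\<theta> \<ge> 0" and ths: "\<theta> * s^2 \<le> 1/8"
  shows "(\<Sum>V\<in>Pow J. exp (\<theta> * (\<Sum>j\<in>J. eps V j * a j)^2)) \<le> 14 * 2 ^ card J"
proof -
  define b where "b V = (\<Sum>j\<in>J. eps V j * a j)" for V
  define q :: real where "q = exp (- 1/4)"
  have "(\<Sum>V\<in>Pow J. exp (\<theta> * (b V)^2)) \<le>
     (\<Sum>V\<in>Pow J. \<Sum>k\<le>m. if real k * s \<le> \<bar>b V\<bar> then exp (\<theta> * ((real k + 1) * s)^2) else 0)"
    by (intro sum_mono layer_bound[OF s th]) (use order_trans[OF abs_eps_sum sa] in \<open>auto simp: b_def\<close>)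
  also have "\<dots> = (\<Sum>k\<le>m. \<Sum>V\<in>Pow J. if real k * s \<le> \<bar>b V\<bar> then exp (\<theta> * ((real k + 1) * s)^2) else 0)"
    by (rule sum.swap)
  also have "\<dots> = (\<Sum>k\<le>m. exp (\<theta> * ((real k + 1) * s)^2) * real (card {V\<in>Pow J. real k * s \<le> \<bar>b V\<bar>}))"
    by (intro sum.cong refl) (simp add: sum.If_cases J Int_def conj_commute)
  also have "\<dots> \<le> (\<Sum>k\<le>m. exp (\<theta> * ((real k + 1) * s)^2) * (2 * 2 ^ card J * exp (- ((real k)^2) / 2)))"
    by (intro sum_mono mult_left_mono) (use tail_abs[OF J s sq] in \<open>auto simp: b_def\<close>)
  also have "\<dots> \<le> (\<Sum>k\<le>m. 2 * 2 ^ card J * exp (1/4) * q ^ k)"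
  proof (intro sum_mono)
    fix k assume "k \<in> {..m}"
    have "\<theta> * ((real k + 1) * s)^2 = (\<theta> * s^2) * (real k + 1)^2" by (simp add: power_mult_distrib)
    also have "\<dots> \<le> 1/8 * (real k + 1)^2" using ths by (intro mult_right_mono) auto
    finally have A: "\<theta> * ((real k + 1) * s)^2 \<le> 1/8 * (real k + 1)^2" .
    have kk: "0 \<le> (3 * real k - 1) * (real k - 1)"
    proof (cases "k = 0")
      case False
      then have "real k \<ge> 1" by simp
      then show ?thesis by (intro mult_nonneg_nonneg) auto
    qed simp
    have B: "1/8 * (real k + 1)^2 + (- ((real k)^2) / 2) \<le> 1/4 + (- 1/4) * real k"
      using kk by (simp add: power2_eq_square algebra_simps)
    have "exp (\<theta> * ((real k + 1) * s)^2) * exp (- ((real k)^2) / 2) \<le> exp (1/4 + (- 1/4) * real k)"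
      unfolding exp_add[symmetric] using A B by simp
    also have "\<dots> = exp (1/4) * q ^ k"
    proof -
      have "q ^ k = exp (real k * (- 1/4))" unfolding q_def exp_of_nat_mult[symmetric] ..
      then show ?thesis by (simp add: exp_add[symmetric] mult.commute)
    qed
    finally show "exp (\<theta> * ((real k + 1) * s)^2) * (2 * 2 ^ card J * exp (- ((real k)^2) / 2)) \<le> 2 * 2 ^ card J * exp (1/4) * q ^ k"
      by (simp add: mult_ac)
  qed
  also have "\<dots> = 2 * 2 ^ card J * exp (1/4) * (\<Sum>k\<le>m. q ^ k)" by (simp add: sum_distrib_left)
  also have "\<dots> \<le> 2 * 2 ^ card J * exp (1/4) * (1 / (1 - q))"
  proof -
    have "q < 1" by (simp add: q_def)
    then show ?thesis by (intro mult_left_mono geom_bound) (auto simp: q_def)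
  qed
  also have "\<dots> \<le> 14 * 2 ^ card J"
  proof -
    have e1: "exp (1/4::real) \<le> 4/3"
    proof -
      have "1 + (-1/4) \<le> exp (-1/4::real)" by (rule exp_ge_add_one_self)
      then have "3/4 \<le> inverse (exp (1/4::real))" by (simp add: exp_minus[symmetric])
      then show ?thesis by (simp add: field_simps)
    qed
    have e2: "1 / (1 - q) \<le> 5"
    proof -
      have "1 + (1/4) \<le> exp (1/4::real)" by (rule exp_ge_add_one_self)
      then have "5 * q \<le> 4 * exp (1/4) * q" by (intro mult_right_mono) (auto simp: q_def)
      moreover have "exp (1/4) * q = 1" unfolding q_def by (simp flip: exp_add)
      ultimately have "q \<le> 4/5" by (simp add: mult.assoc)
      then show ?thesis by (simp add: field_simps)
    qed
    have "exp (1/4) * (1 / (1 - q)) \<le> 4/3 * 5"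
      using e1 e2 by (intro mult_mono) (auto simp: q_def)
    then have "2 * 2 ^ card J * (exp (1/4) * (1 / (1 - q))) \<le> 2 * 2 ^ card J * (4/3 * 5)"
      by (intro mult_left_mono) auto
    moreover have "2 * 2 ^ card J * exp (1/4) * (1 / (1 - q)) = 2 * 2 ^ card J * (exp (1/4) * (1 / (1 - q)))"
      by (simp only: mult.assoc)
    moreover have "2 * 2 ^ card J * (4/3 * 5) \<le> 14 * (2::real) ^ card J" by simp
    ultimately show ?thesis by linarith
  qed
  finally show ?thesis by (simp add: b_def)
qed

lemma jensen_exp:
  assumes "finite A" "A \<noteq> {}"
  shows "exp ((\<Sum>x\<in>A. f x) / card A) \<le> (\<Sum>x\<in>A. exp (f x)) / card A"
proof -
  have c: "card A > 0" using assms by (simp add: card_gt_0_iff)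
  have "exp (\<Sum>x\<in>A. (1 / card A) *\<^sub>R f x) \<le> (\<Sum>x\<in>A. (1 / card A) * exp (f x))"
    by (rule convex_on_sum[OF assms exp_convex]) (use c in auto)
  then show ?thesis by (simp add: sum_divide_distrib[symmetric] sum_distrib_left[symmetric])
qed

lemma split_Pow_sum:
  fixes f :: "'a set \<Rightarrow> real"
  assumes "finite A" "finite B" "A \<inter> B = {}"
  shows "(\<Sum>S\<in>Pow (A \<union> B). f S) = (\<Sum>U\<in>Pow A. \<Sum>V\<in>Pow B. f (U \<union> V))"
proof -
  have inj: "inj_on (\<lambda>(U, V). U \<union> V) (Pow A \<times> Pow B)"
  proof (rule inj_onI, clarify)
    fix U V U' V' assume h: "U \<subseteq> A" "V \<subseteq> B" "U' \<subseteq> A" "V' \<subseteq> B" "U \<union> V = U' \<union> V'"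
    have "U = (U \<union> V) \<inter> A" "V = (U \<union> V) \<inter> B" "U' = (U' \<union> V') \<inter> A" "V' = (U' \<union> V') \<inter> B"
      using h assms(3) by blast+
    then show "U = U' \<and> V = V'" using h(5) by metis
  qed
  have img: "(\<lambda>(U, V). U \<union> V) ` (Pow A \<times> Pow B) = Pow (A \<union> B)"
  proof
    show "Pow (A \<union> B) \<subseteq> (\<lambda>(U, V). U \<union> V) ` (Pow A \<times> Pow B)"
    proof
      fix S assume "S \<in> Pow (A \<union> B)"
      then have "S = (S \<inter> A) \<union> (S \<inter> B)" "(S \<inter> A, S \<inter> B) \<in> Pow A \<times> Pow B" by auto
      then show "S \<in> (\<lambda>(U, V). U \<union> V) ` (Pow A \<times> Pow B)" by (metis (no_types, lifting) case_prod_conv image_eqI)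
    qed
  qed auto
  have "(\<Sum>S\<in>Pow (A \<union> B). f S) = (\<Sum>p\<in>Pow A \<times> Pow B. f ((\<lambda>(U, V). U \<union> V) p))"
    by (subst img[symmetric], rule sum.reindex[OF inj, unfolded comp_def])
  also have "\<dots> = (\<Sum>U\<in>Pow A. \<Sum>V\<in>Pow B. f (U \<union> V))"
    by (simp add: sum.cartesian_product split_def)
  finally show ?thesis .
qed

lemma decoupled:
  fixes a :: "nat \<Rightarrow> nat \<Rightarrow> real"
  assumes N: "finite N" and T: "T \<subseteq> N" and n: "card N = n" and npos: "n > 0"
    and M: "M > 0" and aM: "\<And>i j. i \<in> N \<Longrightarrow> j \<in> N \<Longrightarrow> i \<noteq> j \<Longrightarrow> \<bar>a i j\<bar> \<le> M"
    and mu: "\<mu> \<ge> 0" and cond: "real (card T) * \<mu>^2 / 2 * (real n * M^2) \<le> 1/8"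
  shows "(\<Sum>S\<in>Pow N. exp (\<mu> * (\<Sum>i\<in>T. \<Sum>j\<in>N - T. eps S i * eps S j * a i j))) \<le> 14 * 2 ^ n"
proof (cases "T = {}")
  case True
  then show ?thesis using N n by (simp add: card_Pow)
next
  case Tne: False
  define R where "R = N - T"
  have fT: "finite T" using N T finite_subset by auto
  have fR: "finite R" using N by (simp add: R_def)
  have NTR: "N = T \<union> R" "T \<inter> R = {}" using T by (auto simp: R_def)
  define b where "b i V = (\<Sum>j\<in>R. eps V j * a i j)" for i V
  define \<theta> where "\<theta> = real (card T) * \<mu>^2 / 2"
  have th0: "\<theta> \<ge> 0" by (simp add: \<theta>_def)
  have ct: "card T > 0" using fT Tne by (simp add: card_gt_0_iff)
  have "(\<Sum>S\<in>Pow N. exp (\<mu> * (\<Sum>i\<in>T. \<Sum>j\<in>N - T. eps S i * eps S j * a i j)))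
      = (\<Sum>U\<in>Pow T. \<Sum>V\<in>Pow R. exp (\<mu> * (\<Sum>i\<in>T. \<Sum>j\<in>R. eps (U \<union> V) i * eps (U \<union> V) j * a i j)))"
    unfolding NTR(1) using split_Pow_sum[OF fT fR NTR(2)] by (simp add: R_def Un_Diff)
  also have "\<dots> = (\<Sum>U\<in>Pow T. \<Sum>V\<in>Pow R. exp (\<Sum>i\<in>T. eps U i * (\<mu> * b i V)))"
  proof (intro sum.cong refl)
    fix U V assume U: "U \<in> Pow T" and V: "V \<in> Pow R"
    have "\<mu> * (\<Sum>i\<in>T. \<Sum>j\<in>R. eps (U \<union> V) i * eps (U \<union> V) j * a i j)
        = (\<Sum>i\<in>T. eps U i * (\<mu> * b i V))"
      unfolding sum_distrib_left b_def
    proof (intro sum.cong refl)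
      fix i j assume i: "i \<in> T" and j: "j \<in> R"
      have "eps (U \<union> V) i = eps U i" using i V NTR(2) by (auto simp: eps_def)
      moreover have "eps (U \<union> V) j = eps V j" using j U NTR(2) by (auto simp: eps_def)
      ultimately show "\<mu> * (eps (U \<union> V) i * eps (U \<union> V) j * a i j) = eps U i * (\<mu> * (eps V j * a i j))"
        by (simp add: mult_ac)
    qed
    then show "exp (\<mu> * (\<Sum>i\<in>T. \<Sum>j\<in>R. eps (U \<union> V) i * eps (U \<union> V) j * a i j)) = exp (\<Sum>i\<in>T. eps U i * (\<mu> * b i V))"
      by simp
  qed
  also have "\<dots> = (\<Sum>V\<in>Pow R. \<Sum>U\<in>Pow T. exp (\<Sum>i\<in>T. eps U i * (\<mu> * b i V)))"
    by (rule sum.swap)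
  also have "\<dots> \<le> (\<Sum>V\<in>Pow R. 2 ^ card T * exp ((\<Sum>i\<in>T. (\<mu> * b i V)^2) / 2))"
    by (intro sum_mono G[OF fT])
  also have "\<dots> \<le> (\<Sum>V\<in>Pow R. 2 ^ card T * ((\<Sum>i\<in>T. exp (\<theta> * (b i V)^2)) / card T))"
  proof (intro sum_mono mult_left_mono)
    fix V
    have "(\<Sum>i\<in>T. (\<mu> * b i V)^2) / 2 = (\<Sum>i\<in>T. \<theta> * (b i V)^2) / card T"
      using ct by (simp add: \<theta>_def sum_distrib_left[symmetric] sum_divide_distrib[symmetric] power_mult_distrib field_simps)
    then show "exp ((\<Sum>i\<in>T. (\<mu> * b i V)^2) / 2) \<le> (\<Sum>i\<in>T. exp (\<theta> * (b i V)^2)) / card T"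
      using jensen_exp[OF fT Tne, of "\<lambda>i. \<theta> * (b i V)^2"] by simp
  qed simp
  also have "\<dots> = 2 ^ card T / card T * (\<Sum>i\<in>T. \<Sum>V\<in>Pow R. exp (\<theta> * (b i V)^2))"
    by (simp add: sum_distrib_left sum_divide_distrib[symmetric] sum.swap[of _ T] mult_ac)
  also have "\<dots> \<le> 2 ^ card T / card T * (\<Sum>i\<in>T. 14 * 2 ^ card R)"
  proof (intro mult_left_mono sum_mono)
    fix i assume i: "i \<in> T"
    define s where "s = sqrt (real n) * M"
    have s0: "s > 0" using npos M by (simp add: s_def)
    have s2: "s^2 = real n * M^2" by (simp add: s_def power_mult_distrib)
    have cR: "card R \<le> n" using n card_mono[OF N Diff_subset] by (simp add: R_def)
    have aR: "\<And>j. j \<in> R \<Longrightarrow> \<bar>a i j\<bar> \<le> M" using i T by (intro aM) (auto simp: R_def)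
    have "(\<Sum>j\<in>R. (a i j)^2) \<le> (\<Sum>j\<in>R. M^2)"
    proof (rule sum_mono)
      fix j assume "j \<in> R"
      then have "\<bar>a i j\<bar>^2 \<le> M^2" using aR by (intro power_mono) auto
      then show "(a i j)^2 \<le> M^2" by simp
    qed
    also have "\<dots> = real (card R) * M^2" by simp
    also have "\<dots> \<le> real n * M^2" using cR by (intro mult_right_mono) auto
    finally have sq: "(\<Sum>j\<in>R. (a i j)^2) \<le> s^2" by (simp add: s2)
    have "(\<Sum>j\<in>R. \<bar>a i j\<bar>) \<le> (\<Sum>j\<in>R. M)" using aR by (intro sum_mono) auto
    also have "\<dots> = real (card R) * M" by simp
    also have "\<dots> \<le> real n * M" using cR M by (intro mult_right_mono) auto
    also have "\<dots> \<le> real n * s"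
    proof -
      have "1 \<le> sqrt (real n)" using npos by simp
      then have "M \<le> s" using M by (simp add: s_def)
      then show ?thesis by (intro mult_left_mono) auto
    qed
    finally have sa: "(\<Sum>j\<in>R. \<bar>a i j\<bar>) \<le> real n * s" .
    have ths: "\<theta> * s^2 \<le> 1/8" using cond by (simp add: \<theta>_def s2)
    show "(\<Sum>V\<in>Pow R. exp (\<theta> * (b i V)^2)) \<le> 14 * 2 ^ card R"
      unfolding b_def by (rule sq_moment[OF fR s0 sq sa th0 ths])
  qed simp
  also have "\<dots> = 14 * (2 ^ card T * 2 ^ card R)" using ct by simp
  also have "2 ^ card T * 2 ^ card R = (2::real) ^ n"
    using n N NTR by (simp add: power_add[symmetric] card_Un_disjoint fR fT)
  finally show ?thesis by simp
qed

lemma count_pairs: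
  assumes N: "finite N" and i: "i \<in> N" and j: "j \<in> N" and ij: "i \<noteq> j"
  shows "card {T\<in>Pow N. i \<in> T \<and> j \<notin> T} = 2 ^ (card N - 2)"
proof -
  have "bij_betw (insert i) (Pow (N - {i,j})) {T\<in>Pow N. i \<in> T \<and> j \<notin> T}"
  proof (rule bij_betw_imageI)
    show "inj_on (insert i) (Pow (N - {i, j}))"
    proof (rule inj_onI)
      fix X Y assume "X \<in> Pow (N - {i, j})" "Y \<in> Pow (N - {i, j})" "insert i X = insert i Y"
      then show "X = Y" by (metis Diff_insert_absorb PowD insertCI subset_Diff_insert)
    qed
    show "insert i ` Pow (N - {i, j}) = {T\<in>Pow N. i \<in> T \<and> j \<notin> T}"
    proof
      show "insert i ` Pow (N - {i, j}) \<subseteq> {T\<in>Pow N. i \<in> T \<and> j \<notin> T}" using i ij by auto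
      show "{T\<in>Pow N. i \<in> T \<and> j \<notin> T} \<subseteq> insert i ` Pow (N - {i, j})"
      proof
        fix T assume T: "T \<in> {T\<in>Pow N. i \<in> T \<and> j \<notin> T}"
        then have "T = insert i (T - {i})" "T - {i} \<in> Pow (N - {i, j})" by auto
        then show "T \<in> insert i ` Pow (N - {i, j})" by (metis image_eqI)
      qed
    qed
  qed
  then have "card {T\<in>Pow N. i \<in> T \<and> j \<notin> T} = card (Pow (N - {i,j}))"
    by (simp add: bij_betw_same_card)
  also have "\<dots> = 2 ^ card (N - {i,j})" using N by (simp add: card_Pow)
  also have "card (N - {i,j}) = card N - 2"
    using N i j ij by (subst card_Diff_subset) auto
  finally show ?thesis .
qed

lemma decouple_sum:
  fixes g :: "nat \<Rightarrow> nat \<Rightarrow> real"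
  assumes N: "finite N"
  shows "(\<Sum>T\<in>Pow N. \<Sum>i\<in>T. \<Sum>j\<in>N - T. g i j) = 2 ^ (card N - 2) * (\<Sum>i\<in>N. \<Sum>j\<in>N - {i}. g i j)"
proof -
  have step: "(\<Sum>i\<in>T. \<Sum>j\<in>N - T. g i j) = (\<Sum>i\<in>N. \<Sum>j\<in>N - {i}. if i \<in> T \<and> j \<notin> T then g i j else 0)"
    if T: "T \<subseteq> N" for T
  proof -
    have "(\<Sum>i\<in>N. \<Sum>j\<in>N - {i}. if i \<in> T \<and> j \<notin> T then g i j else 0) = (\<Sum>i\<in>N. if i \<in> T then (\<Sum>j\<in>N - T. g i j) else 0)"
    proof (rule sum.cong[OF refl])
      fix i assume i: "i \<in> N"
      show "(\<Sum>j\<in>N - {i}. if i \<in> T \<and> j \<notin> T then g i j else 0) = (if i \<in> T then (\<Sum>j\<in>N - T. g i j) else 0)"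
      proof (cases "i \<in> T")
        case True
        have "(\<Sum>j\<in>N - {i}. if i \<in> T \<and> j \<notin> T then g i j else 0) = (\<Sum>j\<in>N - {i}. if j \<notin> T then g i j else 0)"
          using True by simp
        also have "\<dots> = (\<Sum>j\<in>{j\<in>N - {i}. j \<notin> T}. g i j)" using N by (subst sum.inter_filter) auto
        also have "{j\<in>N - {i}. j \<notin> T} = N - T" using True by auto
        finally show ?thesis using True by simp
      qed simp
    qed
    also have "\<dots> = (\<Sum>i\<in>{i\<in>N. i \<in> T}. \<Sum>j\<in>N - T. g i j)" by (simp add: sum.inter_filter N)
    also have "{i\<in>N. i \<in> T} = T" using T by auto
    finally show ?thesis by simp
  qed
  have "(\<Sum>T\<in>Pow N. \<Sum>i\<in>T. \<Sum>j\<in>N - T. g i j) = (\<Sum>T\<in>Pow N. \<Sum>i\<in>N. \<Sum>j\<in>N - {i}. if i \<in> T \<and> j \<notin> T then g i j else 0)"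
    by (intro sum.cong refl step) auto
  also have "\<dots> = (\<Sum>i\<in>N. \<Sum>T\<in>Pow N. \<Sum>j\<in>N - {i}. if i \<in> T \<and> j \<notin> T then g i j else 0)"
    by (rule sum.swap)
  also have "\<dots> = (\<Sum>i\<in>N. \<Sum>j\<in>N - {i}. \<Sum>T\<in>Pow N. if i \<in> T \<and> j \<notin> T then g i j else 0)"
    by (intro sum.cong refl sum.swap)
  also have "\<dots> = (\<Sum>i\<in>N. \<Sum>j\<in>N - {i}. 2 ^ (card N - 2) * g i j)"
  proof (intro sum.cong refl)
    fix i j assume i: "i \<in> N" and j: "j \<in> N - {i}"
    have "(\<Sum>T\<in>Pow N. if i \<in> T \<and> j \<notin> T then g i j else 0) = (\<Sum>T\<in>{T\<in>Pow N. i \<in> T \<and> j \<notin> T}. g i j)"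
      using N by (subst sum.inter_filter) auto
    also have "\<dots> = real (card {T\<in>Pow N. i \<in> T \<and> j \<notin> T}) * g i j" by simp
    also have "card {T\<in>Pow N. i \<in> T \<and> j \<notin> T} = 2 ^ (card N - 2)"
      using i j N by (intro count_pairs) auto
    finally show "(\<Sum>T\<in>Pow N. if i \<in> T \<and> j \<notin> T then g i j else 0) = 2 ^ (card N - 2) * g i j" by simp
  qed
  also have "\<dots> = 2 ^ (card N - 2) * (\<Sum>i\<in>N. \<Sum>j\<in>N - {i}. g i j)"
    by (simp add: sum_distrib_left)
  finally show ?thesis .
qed

lemma key:
  fixes n :: nat and a :: "nat \<Rightarrow> nat \<Rightarrow> real" and x :: real
  assumes npos: "n > 0" and ev: "even n" and Mpos: "maxabs n a > 0" and xpos: "x > 0"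
  shows "measure_pmf.prob (pmf_of_set (half_subsets n))
      {S. Zsum n a S \<ge> 8 * real n * maxabs n a * (x + ln (real n))} \<le> 28 * exp (- x)"
proof -
  define N where "N = {1..n}"
  define M where "M = maxabs n a"
  define lam where "lam = 1 / (8 * real n * M)"
  define \<mu> where "\<mu> = 4 * lam"
  define ZT where "ZT T S = (\<Sum>i\<in>T. \<Sum>j\<in>N - T. eps S i * eps S j * a i j)" for T S
  have fN: "finite N" and cN: "card N = n" by (simp_all add: N_def)
  have M0: "M > 0" using Mpos by (simp add: M_def)
  have "n \<noteq> 1" using ev by auto
  then have n2: "n \<ge> 2" using npos by linarith
  have lam0: "lam > 0" using M0 npos by (simp add: lam_def)
  have mu0: "\<mu> \<ge> 0" using lam0 by (simp add: \<mu>_def)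
  have aM: "\<bar>a i j\<bar> \<le> M" if "i \<in> N" "j \<in> N" "i \<noteq> j" for i j
  proof -
    have fin: "finite {\<bar>a i j\<bar> | i j. i \<in> {1..n} \<and> j \<in> {1..n} \<and> i \<noteq> j}"
      by (rule finite_subset[of _ "(\<lambda>(i, j). \<bar>a i j\<bar>) ` ({1..n} \<times> {1..n})"]) auto
    show ?thesis unfolding M_def maxabs_def
      by (rule Max_ge[OF fin]) (use that in \<open>auto simp: N_def\<close>)
  qed
  have Zs: "Zsum n a S = (\<Sum>i\<in>N. \<Sum>j\<in>N - {i}. eps S i * eps S j * a i j)" for S
    by (simp add: Zsum_def N_def)
  have pw: "exp (lam * Zsum n a S) \<le> (\<Sum>T\<in>Pow N. exp (\<mu> * ZT T S)) / 2 ^ n" for S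
  proof -
    have "(\<Sum>T\<in>Pow N. ZT T S) = 2 ^ (n - 2) * Zsum n a S"
      unfolding ZT_def Zs using decouple_sum[OF fN] cN by simp
    have p4: "(2::real) ^ n = 4 * 2 ^ (n - 2)"
    proof -
      have "n = 2 + (n - 2)" using n2 by simp
      then have "(2::real) ^ n = 2 ^ 2 * 2 ^ (n - 2)" by (metis power_add)
      then show ?thesis by simp
    qed
    have "lam * Zsum n a S = (\<Sum>T\<in>Pow N. \<mu> * ZT T S) / card (Pow N)"
      using \<open>(\<Sum>T\<in>Pow N. ZT T S) = 2 ^ (n - 2) * Zsum n a S\<close> fN cN p4
      by (simp add: card_Pow sum_distrib_left[symmetric] \<mu>_def)
    then have "exp (lam * Zsum n a S) \<le> (\<Sum>T\<in>Pow N. exp (\<mu> * ZT T S)) / card (Pow N)"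
      using jensen_exp[of "Pow N" "\<lambda>T. \<mu> * ZT T S"] fN by (simp add: Pow_not_empty)
    then show ?thesis using fN cN by (simp add: card_Pow)
  qed
  have tot: "(\<Sum>S\<in>Pow N. exp (lam * Zsum n a S)) \<le> 14 * 2 ^ n"
  proof -
    have "(\<Sum>S\<in>Pow N. exp (lam * Zsum n a S)) \<le> (\<Sum>S\<in>Pow N. (\<Sum>T\<in>Pow N. exp (\<mu> * ZT T S)) / 2 ^ n)"
      by (intro sum_mono pw)
    also have "\<dots> = (\<Sum>S\<in>Pow N. \<Sum>T\<in>Pow N. exp (\<mu> * ZT T S)) / 2 ^ n"
      by (simp add: sum_divide_distrib)
    also have "\<dots> = (\<Sum>T\<in>Pow N. \<Sum>S\<in>Pow N. exp (\<mu> * ZT T S)) / 2 ^ n"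
      by (subst sum.swap) (rule refl)
    also have "\<dots> \<le> (\<Sum>T\<in>Pow N. 14 * 2 ^ n) / 2 ^ n"
    proof (intro divide_right_mono sum_mono)
      fix T assume T: "T \<in> Pow N"
      have cT: "card T \<le> n" using T fN cN card_mono by fastforce
      have "real (card T) * \<mu>^2 / 2 * (real n * M^2) = real (card T) / (8 * real n)"
        using npos M0 by (simp add: \<mu>_def lam_def field_simps power2_eq_square)
      also have "\<dots> \<le> 1/8" using cT npos by (simp add: field_simps)
      finally have cond: "real (card T) * \<mu>^2 / 2 * (real n * M^2) \<le> 1/8" .
      show "(\<Sum>S\<in>Pow N. exp (\<mu> * ZT T S)) \<le> 14 * 2 ^ n"
        unfolding ZT_def using T by (intro decoupled[OF fN _ cN npos M0 aM mu0 cond]) auto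
    qed simp
    also have "\<dots> = 14 * 2 ^ n" using fN cN by (simp add: card_Pow)
    finally show ?thesis .
  qed
  define H where "H = half_subsets n"
  define E where "E = {S. Zsum n a S \<ge> 8 * real n * maxabs n a * (x + ln (real n))}"
  have HN: "H \<subseteq> Pow N" by (auto simp: H_def half_subsets_def N_def)
  have cH: "card H = n choose (n div 2)"
    unfolding H_def half_subsets_def using n_subsets[of "{1..n}" "n div 2"] by simp
  have fH: "finite H" using HN fN finite_subset by (metis finite_Pow_iff)
  have Hne: "H \<noteq> {}" using cH by (intro notI) simp
  have cHpos: "card H > 0" using cH by simp
  have bin: "(2::real) ^ n \<le> (real n + 1) * card H"
  proof -
    have "(2::nat) ^ n = (\<Sum>k\<le>n. n choose k)" by (simp add: choose_row_sum)
    also have "\<dots> \<le> (\<Sum>k\<le>n. n choose (n div 2))" by (intro sum_mono binomial_maximum)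
    also have "\<dots> = (n + 1) * card H" by (simp add: cH)
    finally have "(2::nat) ^ n \<le> (n + 1) * card H" .
    then have "real ((2::nat) ^ n) \<le> real ((n + 1) * card H)" by (simp only: of_nat_le_iff)
    then show ?thesis by (simp add: algebra_simps)
  qed
  define A where "A = H \<inter> E"
  have fA: "finite A" using fH by (simp add: A_def)
  have "real (card A) * (exp x * real n) = (\<Sum>S\<in>A. exp (x + ln (real n)))"
    using npos by (simp add: exp_add)
  also have "\<dots> \<le> (\<Sum>S\<in>A. exp (lam * Zsum n a S))"
  proof (rule sum_mono)
    fix S assume "S \<in> A"
    then have "8 * real n * M * (x + ln (real n)) \<le> Zsum n a S" by (simp add: A_def E_def M_def)
    then have "lam * (8 * real n * M * (x + ln (real n))) \<le> lam * Zsum n a S"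
      using lam0 by (intro mult_left_mono) auto
    moreover have "lam * (8 * real n * M * (x + ln (real n))) = x + ln (real n)"
      using npos M0 by (simp add: lam_def)
    ultimately show "exp (x + ln (real n)) \<le> exp (lam * Zsum n a S)" by simp
  qed
  also have "\<dots> \<le> (\<Sum>S\<in>Pow N. exp (lam * Zsum n a S))"
    using HN fN by (intro sum_mono2) (auto simp: A_def)
  also have "\<dots> \<le> 14 * 2 ^ n" by (rule tot)
  also have "\<dots> \<le> 14 * ((real n + 1) * card H)" using bin by simp
  also have "\<dots> \<le> 14 * ((2 * real n) * card H)" using npos by (intro mult_left_mono mult_right_mono) auto
  finally have ineq: "real (card A) * exp x * real n \<le> 28 * real (card H) * real n" by (simp add: mult_ac)
  then have ineq2: "real (card A) * exp x \<le> 28 * real (card H)" using npos by simp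
  have "measure_pmf.prob (pmf_of_set H) E = real (card A) / real (card H)"
    using measure_pmf_of_set[OF Hne fH] by (simp add: A_def)
  also have "\<dots> \<le> 28 * exp (- x)"
    using ineq2 cHpos by (simp add: field_simps exp_minus)
  finally show ?thesis by (simp add: H_def E_def)
qed

theorem theorem1:
  shows "\<exists>c>0. \<exists>C>0. \<forall>(n::nat) (a::nat \<Rightarrow> nat \<Rightarrow> real) (x::real).
    n > 0 \<longrightarrow> even n \<longrightarrow> maxabs n a > 0 \<longrightarrow> x > 0 \<longrightarrow>
    measure_pmf.prob (pmf_of_set (half_subsets n))
      {S. Zsum n a S \<ge> c * real n * maxabs n a * (x + ln (real n))} \<le> C * exp (- x)"
  by (rule exI[of _ 8], simp, rule exI[of _ 28], simp add: key)

end
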